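(* For natural numbers $n\ge1$, $k\ge 3$ and $k_1,\dots,k_n\ge 3$, the total domination polynomials of the lollipop graph $L(n,1)$, of the firecracker graph $F(n,k)$, and of the generalized firecracker graph $F(k_1,\dots,k_n)$ are unimodal.
   Context: $L(n,1)$ is the complete graph $K_n$ with one extra vertex joined by a pendant edge to one vertex of $K_n$. For $k\ge 3$, $S_k$ denotes the star with $k$ vertices ($K_{1,k-1}$). The generalized firecracker $F(k_1,\dots,k_n)$ is obtained from stars $S_{k_1},\dots,S_{k_n}$ by choosing one leaf $\ell_i$ of $S_{k_i}$ for each $i$ and adding the edges $\ell_i\ell_{i+1}$ ($1\le i<n$); $F(n,k)=F(k,\dots,k)$ ($n$ copies). For a finite simple graph $G=(V,E)$, a set $D\subseteq V$ is a total dominating set if every vertex of $V$ is adjacent to some vertex of $D$; $d_t(G,i)$ is the number of total dominating sets of size $i$, and $D_t(G,x)=\sum_{i} d_t(G,i)x^i$. A polynomial $\sum a_ix^i$ is unimodal if its coefficient sequence $a_0,\dots,a_N$ satisfies $a_0\le\dots\le a_k\ge a_{k+1}\ge\dots\ge a_N$ for some $k$. *)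

theory Defs
  imports "HOL-Computational_Algebra.Polynomial"
begin

text \<open>A finite simple graph is given by a vertex set V and a symmetric irreflexive
adjacency predicate E (on V).\<close>

definition is_total_dom_set :: "'a set \<Rightarrow> ('a \<Rightarrow> 'a \<Rightarrow> bool) \<Rightarrow> 'a set \<Rightarrow> bool" where
  "is_total_dom_set V E D \<longleftrightarrow> D \<subseteq> V \<and> (\<forall>v\<in>V. \<exists>u\<in>D. E v u)"

definition d_t :: "'a set \<Rightarrow> ('a \<Rightarrow> 'a \<Rightarrow> bool) \<Rightarrow> nat \<Rightarrow> nat" where
  "d_t V E i = card {D. is_total_dom_set V E D \<and> card D = i}"

definition total_dom_poly :: "'a set \<Rightarrow> ('a \<Rightarrow> 'a \<Rightarrow> bool) \<Rightarrow> nat poly" where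
  "total_dom_poly V E = (\<Sum>i\<le>card V. monom (d_t V E i) i)"

definition unimodal :: "nat poly \<Rightarrow> bool" where
  "unimodal p \<longleftrightarrow> (\<exists>k. (\<forall>i j. i \<le> j \<and> j \<le> k \<longrightarrow> coeff p i \<le> coeff p j)
                     \<and> (\<forall>i j. k \<le> i \<and> i \<le> j \<and> j \<le> degree p \<longrightarrow> coeff p j \<le> coeff p i))"

text \<open>Lollipop L(n,1): vertices 0..n; 0..n-1 form K_n, vertex n is pendant at vertex 0.\<close>
definition lollipop_V :: "nat \<Rightarrow> nat set" where
  "lollipop_V n = {0..n}"

definition lollipop_E :: "nat \<Rightarrow> nat \<Rightarrow> nat \<Rightarrow> bool" where
  "lollipop_E n u v \<longleftrightarrow> u \<in> {0..n} \<and> v \<in> {0..n} \<and> u \<noteq> v \<and>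
     ((u < n \<and> v < n) \<or> (u = n \<and> v = 0) \<or> (u = 0 \<and> v = n))"

text \<open>Generalized firecracker F(k_1,...,k_n), ks = [k_1,...,k_n]: star i has centre (i,0)
and leaves (i,j), 1 \<le> j < k_i; the chosen leaf of star i is (i,1); leaves (i,1),(i+1,1) are joined.\<close>
definition firecracker_V :: "nat list \<Rightarrow> (nat \<times> nat) set" where
  "firecracker_V ks = {(i, j). i < length ks \<and> j < ks ! i}"

definition firecracker_E :: "nat list \<Rightarrow> nat \<times> nat \<Rightarrow> nat \<times> nat \<Rightarrow> bool" where
  "firecracker_E ks x y \<longleftrightarrow> x \<in> firecracker_V ks \<and> y \<in> firecracker_V ks \<and>
     ((fst x = fst y \<and> ((snd x = 0 \<and> snd y \<ge> 1) \<or> (snd y = 0 \<and> snd x \<ge> 1)))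
      \<or> (snd x = 1 \<and> snd y = 1 \<and> (fst y = fst x + 1 \<or> fst x = fst y + 1)))"

end

theory Submission imports Defs begin

definition TP :: "(int \<Rightarrow> int) \<Rightarrow> bool" where
  "TP f \<longleftrightarrow> (\<forall>i j s t. i \<le> j \<longrightarrow> s \<le> t \<longrightarrow> f (i-t) * f (j-s) \<le> f (i-s) * f (j-t))"

definition Ex :: "nat poly \<Rightarrow> int \<Rightarrow> int" where
  "Ex p z = (if z < 0 then 0 else int (coeff p (nat z)))"

lemma Ex_nonneg: "Ex p z \<ge> 0" by (simp add: Ex_def)

lemma conv_Ex: "Ex (p*q) m = (\<Sum>r\<in>{0..m}. Ex p r * Ex q (m - r))"
proof (cases "m < 0")
  case True then show ?thesis by (simp add: Ex_def)
next
  case False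
  then obtain n where m: "m = int n" by (metis nonneg_int_cases not_less)
  have "(\<Sum>r\<in>{0..m}. Ex p r * Ex q (m - r)) = (\<Sum>r\<in>int ` {0..n}. Ex p r * Ex q (m - r))"
    by (simp add: m image_int_atLeastAtMost)
  also have "\<dots> = (\<Sum>i\<in>{0..n}. Ex p (int i) * Ex q (int n - int i))"
    by (subst sum.reindex) (auto simp: m)
  also have "\<dots> = (\<Sum>i\<in>{0..n}. int (coeff p i * coeff q (n - i)))"
    by (rule sum.cong) (auto simp: Ex_def of_nat_diff nat_diff_distrib)
  also have "\<dots> = int (coeff (p*q) n)"
    by (simp add: coeff_mult atMost_atLeast0)
  finally show ?thesis by (simp add: Ex_def m)
qed

lemma conv_window:
  assumes "finite S" "{u..i} \<subseteq> S"
  shows "Ex (p*q) (i-u) = (\<Sum>s\<in>S. Ex p (i-s) * Ex q (s-u))"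
proof -
  have "(\<Sum>s\<in>S. Ex p (i-s) * Ex q (s-u)) = (\<Sum>s\<in>{u..i}. Ex p (i-s) * Ex q (s-u))"
    by (rule sum.mono_neutral_right) (use assms in \<open>auto simp: Ex_def\<close>)
  also have "{u..i} = (\<lambda>r. i - r) ` {0..i-u}"
    by (auto simp: image_iff intro!: bexI[where x="i - x" for x])
  also have "(\<Sum>s\<in>(\<lambda>r. i - r) ` {0..i-u}. Ex p (i-s) * Ex q (s-u)) = (\<Sum>r\<in>{0..i-u}. Ex p r * Ex q (i-u-r))"
    by (subst sum.reindex) (auto simp: inj_on_def algebra_simps intro!: sum.cong)
  finally show ?thesis by (simp add: conv_Ex)
qed

lemma CB:
  fixes aa ab bu bv :: "int \<Rightarrow> int"
  assumes "finite S"
    and hA: "\<And>s t. s \<le> t \<Longrightarrow> aa t * ab s \<le> aa s * ab t"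
    and hB: "\<And>s t. s \<le> t \<Longrightarrow> bv s * bu t \<le> bu s * bv t"
  shows "(\<Sum>s\<in>S. aa s * bv s) * (\<Sum>s\<in>S. ab s * bu s) \<le> (\<Sum>s\<in>S. aa s * bu s) * (\<Sum>s\<in>S. ab s * bv s)"
proof -
  define f where "f s t = aa s * ab t * (bu s * bv t - bv s * bu t)" for s t
  have D: "(\<Sum>s\<in>S. aa s * bu s) * (\<Sum>s\<in>S. ab s * bv s) - (\<Sum>s\<in>S. aa s * bv s) * (\<Sum>s\<in>S. ab s * bu s)
        = (\<Sum>s\<in>S. \<Sum>t\<in>S. f s t)"
    by (simp add: f_def sum_product sum_subtractf[symmetric] algebra_simps)
  have sw: "(\<Sum>s\<in>S. \<Sum>t\<in>S. f s t) = (\<Sum>s\<in>S. \<Sum>t\<in>S. f t s)"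
    by (rule sum.swap)
  have nn: "f s t + f t s \<ge> 0" for s t
  proof -
    have e: "f s t + f t s = (aa s * ab t - aa t * ab s) * (bu s * bv t - bv s * bu t)"
      by (simp add: f_def algebra_simps)
    show ?thesis
    proof (cases "s \<le> t")
      case True
      then show ?thesis unfolding e using hA[OF True] hB[OF True] by (intro mult_nonneg_nonneg) auto
    next
      case False
      then have "t \<le> s" by simp
      then show ?thesis unfolding e using hA[OF \<open>t \<le> s\<close>] hB[OF \<open>t \<le> s\<close>]
        by (intro mult_nonpos_nonpos) (auto simp: algebra_simps)
    qed
  qed
  have "2 * (\<Sum>s\<in>S. \<Sum>t\<in>S. f s t) = (\<Sum>s\<in>S. \<Sum>t\<in>S. f s t + f t s)"
    by (simp add: sum.distrib sw[symmetric])
  also have "\<dots> \<ge> 0" by (intro sum_nonneg nn)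
  finally show ?thesis using D by linarith
qed

lemma TP_mult:
  assumes "TP (Ex p)" "TP (Ex q)"
  shows "TP (Ex (p*q))"
  unfolding TP_def
proof (intro allI impI)
  fix i j u v :: int assume ij: "i \<le> j" and uv: "u \<le> v"
  let ?S = "{u..j}"
  have w: "\<And>a b. {a..b} \<subseteq> ?S \<Longrightarrow> Ex (p*q) (b-a) = (\<Sum>s\<in>?S. Ex p (b-s) * Ex q (s-a))"
    by (rule conv_window) auto
  have 1: "Ex (p*q) (i-v) = (\<Sum>s\<in>?S. Ex p (i-s) * Ex q (s-v))" using ij uv by (intro w) auto
  have 2: "Ex (p*q) (j-u) = (\<Sum>s\<in>?S. Ex p (j-s) * Ex q (s-u))" using ij uv by (intro w) auto
  have 3: "Ex (p*q) (i-u) = (\<Sum>s\<in>?S. Ex p (i-s) * Ex q (s-u))" using ij uv by (intro w) auto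
  have 4: "Ex (p*q) (j-v) = (\<Sum>s\<in>?S. Ex p (j-s) * Ex q (s-v))" using ij uv by (intro w) auto
  show "Ex (p*q) (i-v) * Ex (p*q) (j-u) \<le> Ex (p*q) (i-u) * Ex (p*q) (j-v)"
    unfolding 1 2 3 4
  proof (rule CB[where aa="\<lambda>s. Ex p (i-s)" and ab="\<lambda>s. Ex p (j-s)"
        and bu="\<lambda>s. Ex q (s-u)" and bv="\<lambda>s. Ex q (s-v)"])
    show "finite ?S" by simp
    fix s t :: int assume "s \<le> t"
    show "Ex p (i - t) * Ex p (j - s) \<le> Ex p (i - s) * Ex p (j - t)"
      using assms(1) ij \<open>s \<le> t\<close> unfolding TP_def by blast
    show "Ex q (s - v) * Ex q (t - u) \<le> Ex q (s - u) * Ex q (t - v)"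
      using assms(2) uv \<open>s \<le> t\<close> unfolding TP_def by blast
  qed
qed

lemma TP_one: "TP (Ex 1)"
proof -
  have e: "Ex 1 z = (if z = 0 then 1 else 0)" for z
    by (auto simp: Ex_def coeff_1)
  show ?thesis unfolding TP_def
  proof (intro allI impI)
    fix i j s t :: int assume a: "i \<le> j" "s \<le> t"
    show "Ex 1 (i - t) * Ex 1 (j - s) \<le> Ex 1 (i - s) * Ex 1 (j - t)"
    proof (cases "i-t = 0 \<and> j-s=0")
      case True
      then have "i-s = 0 \<and> j-t=0" using a by linarith
      then show ?thesis using True by (simp only: e)
    next
      case False
      then have z: "Ex 1 (i - t) * Ex 1 (j - s) = 0" by (simp only: e) auto
      show ?thesis unfolding z by (intro mult_nonneg_nonneg Ex_nonneg)
    qed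
  qed
qed

lemma TP_lin: "TP (Ex [:1,1:])"
proof -
  have e: "Ex [:1,1:] z = (if z = 0 \<or> z = 1 then 1 else 0)" for z
    by (auto simp: Ex_def coeff_pCons split: nat.splits)
  show ?thesis unfolding TP_def
  proof (intro allI impI)
    fix i j s t :: int assume a: "i \<le> j" "s \<le> t"
    show "Ex [:1,1:] (i - t) * Ex [:1,1:] (j - s) \<le> Ex [:1,1:] (i - s) * Ex [:1,1:] (j - t)"
    proof (cases "(i-t = 0 \<or> i-t = 1) \<and> (j-s=0 \<or> j-s=1)")
      case True
      then have "(i-s = 0 \<or> i-s = 1) \<and> (j-t=0 \<or> j-t=1)" using a by linarith
      then show ?thesis using True by (simp only: e)
    next
      case False
      then have z: "Ex [:1,1:] (i - t) * Ex [:1,1:] (j - s) = 0" by (simp only: e) auto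
      show ?thesis unfolding z by (intro mult_nonneg_nonneg Ex_nonneg)
    qed
  qed
qed

lemma TP_power: "TP (Ex p) \<Longrightarrow> TP (Ex (p ^ m))"
  by (induction m) (simp_all add: TP_mult TP_one)

lemma TP_trunc:
  assumes "TP f" "\<And>z. f z \<ge> 0"
  shows "TP (\<lambda>z. if z \<ge> c then f z else 0)"
  unfolding TP_def
proof (intro allI impI)
  fix i j s t :: int assume a: "i \<le> j" "s \<le> t"
  show "(if c \<le> i - t then f (i - t) else 0) * (if c \<le> j - s then f (j - s) else 0)
        \<le> (if c \<le> i - s then f (i - s) else 0) * (if c \<le> j - t then f (j - t) else 0)"
  proof (cases "c \<le> i - t")
    case True
    then have "c \<le> i - s" "c \<le> j - s" "c \<le> j - t" using a by linarith+
    moreover have "f (i-t) * f (j-s) \<le> f (i-s) * f (j-t)" using a assms(1) unfolding TP_def by blast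
    ultimately show ?thesis using True by (simp only: if_True)
  next
    case False
    then show ?thesis using assms(2) by (simp only: if_False mult_zero_left) (simp add: mult_nonneg_nonneg)
  qed
qed

lemma TP_shift:
  assumes "TP f" shows "TP (\<lambda>z. f (z - c))"
  unfolding TP_def
proof (intro allI impI)
  fix i j s t :: int assume a: "i \<le> j" "s \<le> t"
  have "f ((i-c) - t) * f ((j-c) - s) \<le> f ((i-c) - s) * f ((j-c) - t)"
    using assms[unfolded TP_def, rule_format, of "i-c" "j-c" s t] a by simp
  then show "f (i - t - c) * f (j - s - c) \<le> f (i - s - c) * f (j - t - c)"
    by (simp add: algebra_simps)
qed

definition st :: "nat \<Rightarrow> int \<Rightarrow> int" where
  "st m z = (if z \<ge> 2 then int (m choose nat (z-1)) else 0)"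

lemma Ex_binom: "y \<ge> 0 \<Longrightarrow> Ex ([:1,1:]^m) y = int (m choose nat y)"
proof -
  assume y: "y \<ge> 0"
  show ?thesis
  proof (cases "nat y \<le> m")
    case True then show ?thesis using y by (simp add: Ex_def coeff_linear_poly_power)
  next
    case False
    have "degree ([:1,1:]^m :: nat poly) \<le> m"
      using degree_power_le[of "[:1,1:]::nat poly" m] by simp
    then have "coeff ([:1,1:]^m :: nat poly) (nat y) = 0" using False by (intro coeff_eq_0) auto
    then show ?thesis using y False by (simp add: Ex_def)
  qed
qed

lemma TP_st: "TP (st m)"
proof -
  have "TP (\<lambda>z. if z \<ge> 1 then Ex ([:1,1:]^m) z else 0)"
    by (intro TP_trunc TP_power TP_lin Ex_nonneg)
  then have "TP (\<lambda>z. (\<lambda>z. if z \<ge> 1 then Ex ([:1,1:]^m) z else 0) (z - 1))"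
    by (rule TP_shift)
  also have "(\<lambda>z. (\<lambda>z. if z \<ge> 1 then Ex ([:1,1:]^m) z else 0) (z - 1)) = st m"
    by (auto simp: st_def Ex_binom[simplified] fun_eq_iff nat_diff_distrib)
  finally show ?thesis .
qed

lemma TP_nat:
  assumes "TP (Ex p)" "P \<le> X" "X \<le> Q"
  shows "coeff p P * coeff p Q \<le> coeff p X * coeff p (P + Q - X)"
proof -
  have "Ex p (int X - (int X - int P)) * Ex p (int Q - 0) \<le> Ex p (int X - 0) * Ex p (int Q - (int X - int P))"
    using assms(1)[unfolded TP_def, rule_format, of "int X" "int Q" 0 "int X - int P"] assms(2,3) by simp
  then have h: "int (coeff p P) * int (coeff p Q) \<le> int (coeff p X) * int (coeff p (nat (int Q - (int X - int P))))"
    using assms(2,3) by (simp add: Ex_def)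
  have n: "nat (int Q - (int X - int P)) = P + Q - X" using assms(2,3) by linarith
  from h[unfolded n] have "int (coeff p P) * int (coeff p Q) \<le> int (coeff p X) * int (coeff p (P + Q - X))" .
  then show ?thesis by (simp only: of_nat_mult[symmetric] of_nat_le_iff)
qed

lemma TP_unimodal:
  assumes tp: "TP (Ex p)" shows "unimodal p"
proof -
  define a where "a = coeff p"
  have "Max (a ` {..degree p}) \<in> a ` {..degree p}" by (intro Max_in) simp_all
  then obtain k where k2': "Max (a ` {..degree p}) = a k" and k1: "k \<in> {..degree p}" by (rule imageE)
  note k2 = k2'[symmetric]
  have k: "\<forall>i\<in>{..degree p}. a i \<le> a k" proof
    fix i assume "i \<in> {..degree p}"
    then show "a i \<le> a k" unfolding k2 by (intro Max_ge) simp_all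
  qed
  have mx: "a i \<le> a k" for i
    using k by (cases "i \<le> degree p") (auto simp: a_def coeff_eq_0)
  have up: "a i \<le> a j" if "i \<le> j" "j \<le> k" for i j
  proof (cases "a k = 0")
    case True then show ?thesis using mx[of i] by simp
  next
    case False
    have "a i * a k \<le> a j * a (i + k - j)" using TP_nat[OF tp, of i j k] that by (simp add: a_def)
    also have "\<dots> \<le> a j * a k" using mx by (simp add: mult_le_mono2)
    finally show ?thesis using False by simp
  qed
  have down: "a j \<le> a i" if "k \<le> i" "i \<le> j" for i j
  proof (cases "a k = 0")
    case True then show ?thesis using mx[of j] by simp
  next
    case False
    have "a k * a j \<le> a i * a (k + j - i)" using TP_nat[OF tp, of k i j] that by (simp add: a_def)
    also have "\<dots> \<le> a i * a k" using mx by (simp add: mult_le_mono2)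
    finally show ?thesis using False by (simp add: mult.commute)
  qed
  show ?thesis unfolding unimodal_def a_def[symmetric] using up down by blast
qed

definition GF :: "'a set set \<Rightarrow> nat poly" where
  "GF F = (\<Sum>D\<in>F. monom 1 (card D))"

lemma coeff_GF: "finite F \<Longrightarrow> coeff (GF F) i = card {D\<in>F. card D = i}"
  by (simp add: GF_def coeff_sum coeff_monom sum.inter_filter[symmetric])

lemma tdp_GF:
  assumes "finite V"
  shows "total_dom_poly V E = GF {D. is_total_dom_set V E D}"
proof -
  have fin: "finite {D. is_total_dom_set V E D}"
    by (rule finite_subset[of _ "Pow V"]) (use assms in \<open>auto simp: is_total_dom_set_def\<close>)
  show ?thesis
  proof (rule poly_eqI)
    fix i
    have "coeff (total_dom_poly V E) i = (if i \<le> card V then d_t V E i else 0)"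
      by (simp add: total_dom_poly_def coeff_sum coeff_monom)
    also have "\<dots> = d_t V E i"
    proof (cases "i \<le> card V")
      case False
      have e: "{D. is_total_dom_set V E D \<and> card D = i} = {}"
      proof (rule ccontr)
        assume "{D. is_total_dom_set V E D \<and> card D = i} \<noteq> {}"
        then obtain D where "D \<subseteq> V" "card D = i" by (auto simp: is_total_dom_set_def)
        then show False using False card_mono[OF assms] by fastforce
      qed
      show ?thesis using False unfolding d_t_def e by simp
    qed simp
    also have "\<dots> = coeff (GF {D. is_total_dom_set V E D}) i"
      by (simp add: coeff_GF[OF fin] d_t_def)
    finally show "coeff (total_dom_poly V E) i = coeff (GF {D. is_total_dom_set V E D}) i" .
  qed
qed

lemma star_count:
  assumes fin: "finite L" and c: "c \<notin> L"
  shows "card {D. D \<subseteq> insert c L \<and> c \<in> D \<and> D \<inter> L \<noteq> {} \<and> card D = z}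
         = (if z \<ge> 2 then card L choose (z-1) else 0)"
proof (cases "z \<ge> 2")
  case True
  have eq: "{D. D \<subseteq> insert c L \<and> c \<in> D \<and> D \<inter> L \<noteq> {} \<and> card D = z}
        = insert c ` {E. E \<subseteq> L \<and> card E = z - 1}"
  proof (intro equalityI subsetI)
    fix D assume "D \<in> {D. D \<subseteq> insert c L \<and> c \<in> D \<and> D \<inter> L \<noteq> {} \<and> card D = z}"
    then have D: "D \<subseteq> insert c L" "c \<in> D" "card D = z" by auto
    have "finite D" using D(1) fin finite_subset by blast
    then have "card (D - {c}) = z - 1" using D by simp
    moreover have "D = insert c (D - {c})" using D by auto
    moreover have "D - {c} \<subseteq> L" using D by auto
    ultimately show "D \<in> insert c ` {E. E \<subseteq> L \<and> card E = z - 1}" by blast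
  next
    fix D assume "D \<in> insert c ` {E. E \<subseteq> L \<and> card E = z - 1}"
    then obtain E where E: "D = insert c E" "E \<subseteq> L" "card E = z - 1" by auto
    have "finite E" using E fin finite_subset by blast
    have "c \<notin> E" using E c by auto
    then have "card D = z" using E \<open>finite E\<close> True by simp
    moreover have "E \<noteq> {}" using E True by auto
    ultimately show "D \<in> {D. D \<subseteq> insert c L \<and> c \<in> D \<and> D \<inter> L \<noteq> {} \<and> card D = z}"
      using E by auto
  qed
  have inj: "inj_on (insert c) {E. E \<subseteq> L \<and> card E = z - 1}"
    unfolding inj_on_def
  proof (intro ballI impI)
    fix x y assume "x \<in> {E. E \<subseteq> L \<and> card E = z - 1}" "y \<in> {E. E \<subseteq> L \<and> card E = z - 1}" "insert c x = insert c y"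
    moreover have "c \<notin> x" "c \<notin> y" using c calculation by auto
    ultimately show "x = y" using insert_ident by metis
  qed
  show ?thesis unfolding eq card_image[OF inj] n_subsets[OF fin] using True by simp
next
  case False
  have e: "{D. D \<subseteq> insert c L \<and> c \<in> D \<and> D \<inter> L \<noteq> {} \<and> card D = z} = {}"
  proof (rule ccontr)
    assume "{D. D \<subseteq> insert c L \<and> c \<in> D \<and> D \<inter> L \<noteq> {} \<and> card D = z} \<noteq> {}"
    then obtain D l where D: "D \<subseteq> insert c L" "c \<in> D" "l \<in> D" "l \<in> L" "card D = z" by blast
    have "finite D" using D(1) fin finite_subset by blast
    have "{c, l} \<subseteq> D" using D by auto
    then have "card {c, l} \<le> card D" using \<open>finite D\<close> by (rule card_mono[rotated])
    moreover have "c \<noteq> l" using c D by auto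
    then have "card {c, l} = 2" by simp
    ultimately show False using D False by simp
  qed
  show ?thesis using False unfolding e by simp
qed

lemma Ex_star:
  assumes fin: "finite L" and c: "c \<notin> L"
  shows "Ex (GF {D. D \<subseteq> insert c L \<and> c \<in> D \<and> D \<inter> L \<noteq> {}}) = st (card L)"
proof
  fix z :: int
  have fin2: "finite {D. D \<subseteq> insert c L \<and> c \<in> D \<and> D \<inter> L \<noteq> {}}"
    by (rule finite_subset[of _ "Pow (insert c L)"]) (use fin in auto)
  show "Ex (GF {D. D \<subseteq> insert c L \<and> c \<in> D \<and> D \<inter> L \<noteq> {}}) z = st (card L) z"
  proof (cases "z < 0")
    case True then show ?thesis by (simp add: Ex_def st_def)
  next
    case False
    have "{D \<in> {D. D \<subseteq> insert c L \<and> c \<in> D \<and> D \<inter> L \<noteq> {}}. card D = nat z}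
        = {D. D \<subseteq> insert c L \<and> c \<in> D \<and> D \<inter> L \<noteq> {} \<and> card D = nat z}" by auto
    moreover have "(2 \<le> nat z) = (2 \<le> z)" using False by (simp add: le_nat_iff)
    ultimately show ?thesis using False
      by (simp add: Ex_def st_def coeff_GF[OF fin2] star_count[OF fin c] nat_diff_distrib)
  qed
qed

lemma lolli_char:
  assumes n: "n \<ge> 1"
  shows "is_total_dom_set (lollipop_V n) (lollipop_E n) D \<longleftrightarrow>
         D \<subseteq> insert 0 {1..n} \<and> 0 \<in> D \<and> D \<inter> {1..n} \<noteq> {}"
proof
  assume a: "is_total_dom_set (lollipop_V n) (lollipop_E n) D"
  have V: "lollipop_V n = insert 0 {1..n}" by (auto simp: lollipop_V_def)
  have sub: "D \<subseteq> insert 0 {1..n}" using a V by (simp add: is_total_dom_set_def)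
  have "\<exists>u\<in>D. lollipop_E n n u"
    using a unfolding is_total_dom_set_def lollipop_V_def by (meson atLeastAtMost_iff le0 order_refl)
  then obtain u where u: "u \<in> D" "lollipop_E n n u" by blast
  then have "u = 0" using n by (auto simp: lollipop_E_def)
  with u have z: "0 \<in> D" by simp
  have "\<exists>u\<in>D. lollipop_E n 0 u"
    using a unfolding is_total_dom_set_def lollipop_V_def by (meson atLeastAtMost_iff le0)
  then obtain w where w: "w \<in> D" "lollipop_E n 0 w" by blast
  then have "w \<in> {1..n}" by (auto simp: lollipop_E_def)
  with w have "D \<inter> {1..n} \<noteq> {}" by blast
  with sub z show "D \<subseteq> insert 0 {1..n} \<and> 0 \<in> D \<and> D \<inter> {1..n} \<noteq> {}" by blast
next
  assume a: "D \<subseteq> insert 0 {1..n} \<and> 0 \<in> D \<and> D \<inter> {1..n} \<noteq> {}"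
  then obtain l where l: "l \<in> D" "l \<in> {1..n}" by blast
  have sub: "D \<subseteq> lollipop_V n" using a by (auto simp: lollipop_V_def)
  have "\<exists>u\<in>D. lollipop_E n v u" if v: "v \<in> lollipop_V n" for v
  proof (cases "v = 0")
    case True
    have "lollipop_E n v l" using True l by (auto simp: lollipop_E_def)
    then show ?thesis using l by blast
  next
    case False
    have "lollipop_E n v 0" using False v n by (auto simp: lollipop_E_def lollipop_V_def)
    then show ?thesis using a by blast
  qed
  then show "is_total_dom_set (lollipop_V n) (lollipop_E n) D"
    using sub by (simp add: is_total_dom_set_def)
qed

lemma lolli_unimodal:
  assumes n: "n \<ge> 1"
  shows "unimodal (total_dom_poly (lollipop_V n) (lollipop_E n))"
proof -
  have "total_dom_poly (lollipop_V n) (lollipop_E n)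
        = GF {D. D \<subseteq> insert 0 {1..n} \<and> 0 \<in> D \<and> D \<inter> {1..n} \<noteq> {}}"
    unfolding tdp_GF[of "lollipop_V n", OF finite_atLeastAtMost[of 0 n, folded lollipop_V_def]]
    by (intro arg_cong[where f=GF] Collect_cong lolli_char[OF n])
  moreover have "Ex (GF {D. D \<subseteq> insert 0 {1..n} \<and> 0 \<in> D \<and> D \<inter> {1..n} \<noteq> {}}) = st n"
    using Ex_star[of "{1..n}" 0] by simp
  ultimately show ?thesis using TP_st TP_unimodal by metis
qed

lemma fV_finite: "finite (firecracker_V ks)"
proof -
  have "firecracker_V ks = Sigma {..<length ks} (\<lambda>i. {..<ks!i})" by (auto simp: firecracker_V_def)
  then show ?thesis by simp
qed

definition G :: "nat list \<Rightarrow> (nat \<times> nat) set set" where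
  "G ks = {D. D \<subseteq> firecracker_V ks \<and> (\<forall>i<length ks. (i,0) \<in> D \<and> D \<inter> Pair i ` {1..<ks!i} \<noteq> {})}"

lemma fire_char:
  assumes ks: "\<forall>x\<in>set ks. x \<ge> 3"
  shows "is_total_dom_set (firecracker_V ks) (firecracker_E ks) D \<longleftrightarrow> D \<in> G ks"
proof
  assume a: "is_total_dom_set (firecracker_V ks) (firecracker_E ks) D"
  have sub: "D \<subseteq> firecracker_V ks" using a by (simp add: is_total_dom_set_def)
  have "(i,0) \<in> D \<and> D \<inter> Pair i ` {1..<ks!i} \<noteq> {}" if i: "i < length ks" for i
  proof -
    have k3: "ks ! i \<ge> 3" using ks i by auto
    have "(i,2) \<in> firecracker_V ks" using i k3 by (simp add: firecracker_V_def)
    then obtain u where u: "u \<in> D" "firecracker_E ks (i,2) u" using a unfolding is_total_dom_set_def by blast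
    then have "u = (i,0)" by (cases u) (auto simp: firecracker_E_def)
    with u have c: "(i,0) \<in> D" by simp
    have "(i,0) \<in> firecracker_V ks" using i k3 by (simp add: firecracker_V_def)
    then obtain w where w: "w \<in> D" "firecracker_E ks (i,0) w" using a unfolding is_total_dom_set_def by blast
    then have "w \<in> Pair i ` {1..<ks!i}" by (cases w) (auto simp: firecracker_E_def firecracker_V_def)
    with w c show ?thesis by blast
  qed
  with sub show "D \<in> G ks" by (simp add: G_def)
next
  assume a: "D \<in> G ks"
  have sub: "D \<subseteq> firecracker_V ks" using a by (simp add: G_def)
  have "\<exists>u\<in>D. firecracker_E ks v u" if v: "v \<in> firecracker_V ks" for v
  proof -
    obtain i j where ij: "v = (i,j)" "i < length ks" "j < ks!i" using v by (auto simp: firecracker_V_def)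
    have c: "(i,0) \<in> D" and l: "D \<inter> Pair i ` {1..<ks!i} \<noteq> {}" using a ij by (auto simp: G_def)
    show ?thesis
    proof (cases "j = 0")
      case True
      from l obtain l where "l \<in> {1..<ks!i}" "(i,l) \<in> D" by blast
      moreover have "(i,l) \<in> firecracker_V ks" using calculation ij by (simp add: firecracker_V_def)
      ultimately have "firecracker_E ks v (i,l)" using ij True v by (simp add: firecracker_E_def)
      then show ?thesis using \<open>(i,l) \<in> D\<close> by blast
    next
      case False
      have "(i,0) \<in> firecracker_V ks" using c sub by blast
      then have "firecracker_E ks v (i,0)" using ij False v by (simp add: firecracker_E_def)
      then show ?thesis using c by blast
    qed
  qed
  then show "is_total_dom_set (firecracker_V ks) (firecracker_E ks) D"
    using sub by (simp add: is_total_dom_set_def)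
qed

lemma GF_union:
  assumes "finite F1" "finite F2" "\<forall>A\<in>F1. A \<subseteq> VV" "\<forall>B\<in>F2. B \<subseteq> WW" "VV \<inter> WW = {}"
    "\<forall>A\<in>F1. finite A" "\<forall>B\<in>F2. finite B"
  shows "GF ((\<lambda>(A,B). A \<union> B) ` (F1 \<times> F2)) = GF F1 * GF F2"
proof -
  have inj: "inj_on (\<lambda>(A,B). A \<union> B) (F1 \<times> F2)"
  proof (rule inj_onI, clarify)
    fix A B A' B' assume *: "A \<in> F1" "B \<in> F2" "A' \<in> F1" "B' \<in> F2" "A \<union> B = A' \<union> B'"
    have "A = (A \<union> B) \<inter> VV" "A' = (A' \<union> B') \<inter> VV" "B = (A \<union> B) \<inter> WW" "B' = (A' \<union> B') \<inter> WW"
      using * assms(3,4,5) by blast+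
    then show "A = A' \<and> B = B'" using *(5) by metis
  qed
  have "GF ((\<lambda>(A,B). A \<union> B) ` (F1 \<times> F2)) = (\<Sum>x\<in>F1 \<times> F2. monom 1 (card ((\<lambda>(A,B). A \<union> B) x)))"
    unfolding GF_def by (subst sum.reindex[OF inj]) (simp add: comp_def)
  also have "\<dots> = (\<Sum>x\<in>F1 \<times> F2. monom 1 (card (fst x)) * monom 1 (card (snd x)))"
  proof (rule sum.cong[OF refl])
    fix x assume x: "x \<in> F1 \<times> F2"
    obtain A B where AB: "x = (A,B)" by (cases x)
    have "A \<inter> B = {}" "finite A" "finite B" using assms(3-7) x AB by blast+
    then show "monom 1 (card ((\<lambda>(A,B). A \<union> B) x)) = monom 1 (card (fst x)) * monom (1::nat) (card (snd x))"
      unfolding AB by (simp add: card_Un_disjoint mult_monom)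
  qed
  also have "\<dots> = GF F1 * GF F2"
    unfolding GF_def sum_product by (simp add: sum.cartesian_product case_prod_beta)
  finally show ?thesis .
qed

lemma fV_snoc:
  assumes "k \<ge> 1"
  shows "firecracker_V (ks@[k]) = firecracker_V ks \<union> insert (length ks,0) (Pair (length ks) ` {1..<k})"
proof (intro equalityI subsetI)
  fix x assume "x \<in> firecracker_V (ks@[k])"
  then obtain i j where x: "x = (i,j)" "i < Suc (length ks)" "j < (ks@[k])!i" by (auto simp: firecracker_V_def)
  show "x \<in> firecracker_V ks \<union> insert (length ks,0) (Pair (length ks) ` {1..<k})"
  proof (cases "i < length ks")
    case True then show ?thesis using x by (simp add: firecracker_V_def nth_append)
  next
    case False then have "i = length ks" using x by simp
    then show ?thesis using x by auto
  qed
next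
  fix x assume "x \<in> firecracker_V ks \<union> insert (length ks,0) (Pair (length ks) ` {1..<k})"
  then show "x \<in> firecracker_V (ks@[k])" using assms by (auto simp: firecracker_V_def nth_append)
qed

lemma G_snoc:
  fixes ks :: "nat list" and k :: nat
  assumes k: "k \<ge> 1"
  defines "n \<equiv> length ks"
  defines "L \<equiv> Pair n ` {1..<k}"
  shows "G (ks@[k]) = (\<lambda>(A,B). A \<union> B) ` (G ks \<times> {B. B \<subseteq> insert (n,0) L \<and> (n,0) \<in> B \<and> B \<inter> L \<noteq> {}})"
proof (intro equalityI subsetI)
  have V: "firecracker_V (ks@[k]) = firecracker_V ks \<union> insert (n,0) L"
    using fV_snoc[OF k] by (simp add: n_def L_def)
  fix D assume D: "D \<in> G (ks@[k])"
  have sub: "D \<subseteq> firecracker_V ks \<union> insert (n,0) L" using D V by (simp add: G_def)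
  have cond: "(i,0) \<in> D \<and> D \<inter> Pair i ` {1..<(ks@[k])!i} \<noteq> {}" if "i \<le> n" for i
    using D that by (auto simp: G_def n_def)
  define A where "A = D \<inter> firecracker_V ks"
  define B where "B = D \<inter> insert (n,0) L"
  have "D = A \<union> B" using sub by (auto simp: A_def B_def)
  moreover have "A \<in> G ks"
    unfolding G_def
  proof (intro CollectI conjI allI impI)
    show "A \<subseteq> firecracker_V ks" by (simp add: A_def)
    fix i assume i: "i < length ks"
    then have c: "(i,0) \<in> D" and l: "D \<inter> Pair i ` {1..<ks!i} \<noteq> {}"
      using cond[of i] by (auto simp: n_def nth_append)
    from l obtain j where j: "(i,j) \<in> D" "j \<in> {1..<ks!i}" by blast
    have "(i,j) \<in> firecracker_V ks" "(i,0) \<in> firecracker_V ks" using i j by (auto simp: firecracker_V_def)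
    then show "(i,0) \<in> A" "A \<inter> Pair i ` {1..<ks!i} \<noteq> {}" using c j by (auto simp: A_def)
  qed
  moreover have "B \<in> {B. B \<subseteq> insert (n,0) L \<and> (n,0) \<in> B \<and> B \<inter> L \<noteq> {}}"
    using cond[of n] by (auto simp: B_def L_def n_def)
  ultimately show "D \<in> (\<lambda>(A,B). A \<union> B) ` (G ks \<times> {B. B \<subseteq> insert (n,0) L \<and> (n,0) \<in> B \<and> B \<inter> L \<noteq> {}})"
    by blast
next
  have V: "firecracker_V (ks@[k]) = firecracker_V ks \<union> insert (n,0) L"
    using fV_snoc[OF k] by (simp add: n_def L_def)
  fix D assume "D \<in> (\<lambda>(A,B). A \<union> B) ` (G ks \<times> {B. B \<subseteq> insert (n,0) L \<and> (n,0) \<in> B \<and> B \<inter> L \<noteq> {}})"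
  then obtain A B where D: "D = A \<union> B" and A: "A \<in> G ks" and B: "B \<subseteq> insert (n,0) L" "(n,0) \<in> B" "B \<inter> L \<noteq> {}"
    by auto
  show "D \<in> G (ks@[k])"
    unfolding G_def
  proof (intro CollectI conjI allI impI)
    show "D \<subseteq> firecracker_V (ks@[k])" using A B D V by (auto simp: G_def)
    fix i assume i: "i < length (ks@[k])"
    have h: "(i,0) \<in> D \<and> D \<inter> Pair i ` {1..<(ks@[k])!i} \<noteq> {}"
    proof (cases "i < n")
      case True
      then show ?thesis using A D by (auto simp: G_def nth_append n_def)
    next
      case False
      then have "i = n" using i by (simp add: n_def)
      then show ?thesis using B D by (auto simp: L_def n_def)
    qed
    then show "(i,0) \<in> D" by simp
    from h show "D \<inter> Pair i ` {1..<(ks@[k])!i} \<noteq> {}" by simp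
  qed
qed

lemma TP_G: "\<forall>x\<in>set ks. x \<ge> 1 \<Longrightarrow> TP (Ex (GF (G ks)))"
proof (induction ks rule: rev_induct)
  case Nil
  have "G [] = {{}}" by (auto simp: G_def firecracker_V_def)
  moreover have "GF {{}} = 1" by (simp add: GF_def poly_eq_iff coeff_monom)
  ultimately have "GF (G []) = 1" by (simp only:)
  then show ?case by (simp only: TP_one)
next
  case (snoc k ks)
  define n where "n = length ks"
  define L where "L = Pair n ` {1..<k}"
  define S where "S = {B. B \<subseteq> insert (n,0) L \<and> (n,0) \<in> B \<and> B \<inter> L \<noteq> {}}"
  have k: "k \<ge> 1" using snoc.prems by simp
  have finL: "finite L" by (simp add: L_def)
  have cL: "(n,0) \<notin> L" by (auto simp: L_def)
  have cardL: "card L = k - 1" unfolding L_def by (subst card_image) (auto simp: inj_on_def)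
  have finG: "finite (G ks)"
    by (rule finite_subset[of _ "Pow (firecracker_V ks)"]) (auto simp: G_def fV_finite)
  have finS: "finite S"
    by (rule finite_subset[of _ "Pow (insert (n,0) L)"]) (auto simp: S_def finL)
  have "G (ks@[k]) = (\<lambda>(A,B). A \<union> B) ` (G ks \<times> S)"
    unfolding S_def L_def n_def by (rule G_snoc[OF k])
  also have "GF \<dots> = GF (G ks) * GF S"
  proof (rule GF_union[where VV="firecracker_V ks" and WW="insert (n,0) L"])
    show "finite (G ks)" "finite S" by (fact finG, fact finS)
    show "\<forall>A\<in>G ks. A \<subseteq> firecracker_V ks" by (simp add: G_def)
    show "\<forall>B\<in>S. B \<subseteq> insert (n,0) L" by (simp add: S_def)
    show "firecracker_V ks \<inter> insert (n,0) L = {}" by (auto simp: firecracker_V_def L_def n_def)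
    show "\<forall>A\<in>G ks. finite A" using fV_finite by (auto simp: G_def intro: finite_subset)
    show "\<forall>B\<in>S. finite B" using finL by (auto simp: S_def intro: finite_subset)
  qed
  finally have e: "GF (G (ks@[k])) = GF (G ks) * GF S" .
  have "Ex (GF S) = st (k-1)" unfolding S_def using Ex_star[OF finL cL] cardL by simp
  then have "TP (Ex (GF S))" using TP_st by simp
  moreover have "TP (Ex (GF (G ks)))" using snoc by simp
  ultimately show ?case unfolding e by (rule TP_mult[rotated])
qed

lemma fire_unimodal:
  assumes "\<forall>x\<in>set ks. x \<ge> 3"
  shows "unimodal (total_dom_poly (firecracker_V ks) (firecracker_E ks))"
proof -
  have "total_dom_poly (firecracker_V ks) (firecracker_E ks) = GF (G ks)"
    unfolding tdp_GF[OF fV_finite] using fire_char[OF assms] by (metis Collect_mem_eq Collect_cong)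
  moreover have "TP (Ex (GF (G ks)))" using assms by (intro TP_G) auto
  ultimately show ?thesis using TP_unimodal by simp
qed

theorem mainTheorem8:
  fixes n k :: nat and ks :: "nat list"
  assumes "n \<ge> 1" and "k \<ge> 3" and "length ks = n" and "\<forall>x\<in>set ks. x \<ge> 3"
  shows "unimodal (total_dom_poly (lollipop_V n) (lollipop_E n))
       \<and> unimodal (total_dom_poly (firecracker_V (replicate n k)) (firecracker_E (replicate n k)))
       \<and> unimodal (total_dom_poly (firecracker_V ks) (firecracker_E ks))"
  using lolli_unimodal[OF assms(1)] fire_unimodal[of "replicate n k"] fire_unimodal[OF assms(4)] assms(2)
  by simp

end
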